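(* For a parameter $p\in[1,2]$ with $p\neq 1.5$, Width-2-Johnson's algorithm with parameter $p$ does not achieve an approximation ratio of $3/4$ for weighted max-sat.
   Context: Weighted max-sat: clauses (sets of literals) with nonnegative weights; maximize the total weight of satisfied clauses. Width-2-Johnson's algorithm with parameter $p$ processes the variables $x_1,\dots,x_n$ in the given online order while maintaining two (partial) assignments $A_1,A_2$, initially empty. For a clause $C$ and a partial assignment, the measure $\mu(C)$ is the weight of $C$ times $2^{-l}$, where $l$ is the number of variables of $C$ not yet assigned; for a set of clauses the measure is the sum. When processing $x_i$, for each $D=(d_1,d_2)\in\{0,1\}^2$ let $C_1$ be the set of clauses that become satisfied by assigning $x_i$ to $d_1$ in $A_1$ and $C_2$ the set of clauses that become satisfied by assigning $x_i$ to $d_2$ in $A_2$, and set $f(D)=\mu(C_1\setminus C_2)+\mu(C_2\setminus C_1)+p\,\mu(C_1\cap C_2)$; then $x_i$ is assigned $d_1$ in $A_1$ and $d_2$ in $A_2$ for $D=\arg\max_D f(D)$. At the end the algorithm returns whichever of $A_1,A_2$ satisfies the larger total weight. The approximation ratio is $\inf_I v(\mathbb{A},I)/v(I)$. *)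

theory Defs
  imports Main "HOL.Real"
begin

text \<open>Variables are natural numbers 0,...,n-1, processed in the order 0,1,...,n-1.
  A literal is a pair (v, b): b = True is the positive literal x_v, b = False is its negation.\<close>

type_synonym lit = "nat \<times> bool"
type_synonym wclause = "lit set \<times> real"
type_synonym assignment = "nat \<Rightarrow> bool"

definition wf_instance :: "nat \<Rightarrow> wclause list \<Rightarrow> bool" where
  "wf_instance n cls \<longleftrightarrow>
     (\<forall>(C, w) \<in> set cls. finite C \<and> 0 \<le> w \<and> (\<forall>(v, b) \<in> C. v < n))"

definition sat :: "assignment \<Rightarrow> lit set \<Rightarrow> bool" where
  "sat a C \<longleftrightarrow> (\<exists>(v, b) \<in> C. a v = b)"

definition clause_value :: "wclause list \<Rightarrow> assignment \<Rightarrow> real" where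
  "clause_value cls a = (\<Sum>j<length cls. if sat a (fst (cls ! j)) then snd (cls ! j) else 0)"

text \<open>Partial assignment: only variables < k are assigned (by a).\<close>
definition sat_upto :: "nat \<Rightarrow> assignment \<Rightarrow> lit set \<Rightarrow> bool" where
  "sat_upto k a C \<longleftrightarrow> (\<exists>(v, b) \<in> C. v < k \<and> a v = b)"

definition becomes_sat :: "nat \<Rightarrow> assignment \<Rightarrow> bool \<Rightarrow> lit set \<Rightarrow> bool" where
  "becomes_sat k a d C \<longleftrightarrow> \<not> sat_upto k a C \<and> (k, d) \<in> C"

definition mu :: "nat \<Rightarrow> wclause \<Rightarrow> real" where
  "mu k c = snd c * (1/2) ^ card {v. v \<ge> k \<and> (\<exists>b. (v, b) \<in> fst c)}"

definition f_val :: "real \<Rightarrow> wclause list \<Rightarrow> nat \<Rightarrow> assignment \<Rightarrow> assignment \<Rightarrow> bool \<times> bool \<Rightarrow> real" where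
  "f_val p cls k A1 A2 D =
     (\<Sum>j<length cls.
        let c = cls ! j;
            s1 = becomes_sat k A1 (fst D) (fst c);
            s2 = becomes_sat k A2 (snd D) (fst c)
        in (if s1 \<and> \<not> s2 then mu k c else 0)
         + (if s2 \<and> \<not> s1 then mu k c else 0)
         + (if s1 \<and> s2 then p * mu k c else 0))"

text \<open>A selection rule (resolving ties arbitrarily, possibly depending on the whole
  instance and state) is admissible if it always returns a maximiser of f.\<close>
type_synonym selector =
  "nat \<Rightarrow> wclause list \<Rightarrow> nat \<Rightarrow> assignment \<Rightarrow> assignment \<Rightarrow> bool \<times> bool"

definition valid_selector :: "real \<Rightarrow> selector \<Rightarrow> bool" where
  "valid_selector p sel \<longleftrightarrow>
     (\<forall>n cls k A1 A2 D. f_val p cls k A1 A2 D \<le> f_val p cls k A1 A2 (sel n cls k A1 A2))"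

text \<open>State after processing variables 0,...,k-1 (values at variables \<ge> k are irrelevant).\<close>
fun w2j_run :: "selector \<Rightarrow> nat \<Rightarrow> wclause list \<Rightarrow> nat \<Rightarrow> assignment \<times> assignment" where
  "w2j_run sel n cls 0 = (\<lambda>_. False, \<lambda>_. False)"
| "w2j_run sel n cls (Suc k) =
     (let (A1, A2) = w2j_run sel n cls k;
          D = sel n cls k A1 A2
      in (A1(k := fst D), A2(k := snd D)))"

definition w2j_value :: "selector \<Rightarrow> nat \<Rightarrow> wclause list \<Rightarrow> real" where
  "w2j_value sel n cls =
     (let (A1, A2) = w2j_run sel n cls n
      in max (clause_value cls A1) (clause_value cls A2))"

end

theory Submission imports Defs begin

definition cls1 :: "real \<Rightarrow> real \<Rightarrow> wclause list" where
 "cls1 b e = [({(0,True)},1), ({(0,False)},b), ({(Suc 0,False)},1), ({(Suc 0,True)},b), ({(0,True),(Suc 0,False)},e)]"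
definition cls2 :: "real \<Rightarrow> wclause list" where
 "cls2 c = [({(Suc 0,True)},c), ({(0,False),(Suc 0,True)},1), ({(0,True),(Suc 0,False)},c)]"

lemma mu_unit: "mu k ({(v,b)}, w) = (if k \<le> v then w/2 else w)"
proof -
  have "{u. k \<le> u \<and> (\<exists>c. (u, c) \<in> {(v,b)})} = (if k \<le> v then {v} else {})" by auto
  thus ?thesis by (simp add: mu_def)
qed
lemma mu_pair: "b1 \<noteq> b2 \<Longrightarrow> mu k ({(0,b1),(Suc 0,b2)}, w) = (if k = 0 then w/4 else if k = Suc 0 then w/2 else w)"
proof -
  have "{u. k \<le> u \<and> (\<exists>c. (u, c) \<in> {(0::nat,b1),(Suc 0,b2)})} = (if k = 0 then {0,1} else if k = Suc 0 then {1} else {})" by auto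
  thus ?thesis by (simp add: mu_def)
qed

lemmas fsimps = f_val_def cls1_def cls2_def Let_def becomes_sat_def sat_upto_def mu_unit mu_pair lessThan_Suc numeral_eq_Suc algebra_simps

lemma run_Suc: "w2j_run sel n cls (Suc k) =
  (let R = w2j_run sel n cls k; D = sel n cls k (fst R) (snd R) in ((fst R)(k := fst D), (snd R)(k := snd D)))"
  by (simp add: split_def Let_def)

lemma c1_f0:
  "f_val p (cls1 b e) 0 A1 A2 (True,True) = p/2 + p*e/4"
  "f_val p (cls1 b e) 0 A1 A2 (False,False) = p*b/2"
  "f_val p (cls1 b e) 0 A1 A2 (True,False) = 1/2 + e/4 + b/2"
  "f_val p (cls1 b e) 0 A1 A2 (False,True) = 1/2 + e/4 + b/2"
  by (simp_all add: fsimps)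

lemma c1_f1a: assumes "A1 0" "\<not> A2 0" shows
  "f_val p (cls1 b e) (Suc 0) A1 A2 (True,True) = p*b/2"
  "f_val p (cls1 b e) (Suc 0) A1 A2 (False,False) = (p + e)/2"
  "f_val p (cls1 b e) (Suc 0) A1 A2 (True,False) = (b + 1 + e)/2"
  "f_val p (cls1 b e) (Suc 0) A1 A2 (False,True) = (1 + b)/2"
  using assms by (simp_all add: fsimps)

lemma c1_f1b: assumes "\<not> A1 0" "A2 0" shows
  "f_val p (cls1 b e) (Suc 0) A1 A2 (True,True) = p*b/2"
  "f_val p (cls1 b e) (Suc 0) A1 A2 (False,False) = (p + e)/2"
  "f_val p (cls1 b e) (Suc 0) A1 A2 (True,False) = (1 + b)/2"
  "f_val p (cls1 b e) (Suc 0) A1 A2 (False,True) = (b + 1 + e)/2"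
  using assms by (simp_all add: fsimps)

lemma c1_val: "clause_value (cls1 b e) A = (if A 0 then 1 else b) + (if A (Suc 0) then b else 1) + (if A 0 \<or> \<not> A (Suc 0) then e else 0)"
  by (simp add: clause_value_def sat_def cls1_def lessThan_Suc numeral_eq_Suc)

lemma c2_f0:
  "f_val p (cls2 c) 0 A1 A2 (True,True) = p*c/4"
  "f_val p (cls2 c) 0 A1 A2 (False,False) = p/4"
  "f_val p (cls2 c) 0 A1 A2 (True,False) = 1/4 + c/4"
  "f_val p (cls2 c) 0 A1 A2 (False,True) = 1/4 + c/4"
  by (simp_all add: fsimps)

lemma c2_val: "clause_value (cls2 c) A = (if A (Suc 0) then c else 0) + (if \<not> A 0 \<or> A (Suc 0) then 1 else 0) + (if A 0 \<or> \<not> A (Suc 0) then c else 0)"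
  by (simp add: clause_value_def sat_def cls2_def lessThan_Suc numeral_eq_Suc)

lemma ar1: fixes p b e :: real assumes "b = (2*p-1)/4" "e = (3-2*p)/4" "1 \<le> p" "p < 3/2"
  shows "p/2 + p*e/4 < 1/2 + e/4 + b/2" "p*b/2 < 1/2 + e/4 + b/2"
    "p*b/2 < (b + 1 + e)/2" "(p + e)/2 < (b + 1 + e)/2" "(1 + b)/2 < (b + 1 + e)/2"
    "1 + b + e < 3/4 * (1 + 1 + e)" "0 \<le> b" "0 \<le> e"
proof -
  have "0 < (3-2*p)*(3-p)" using assms by (intro mult_pos_pos) auto
  hence q1: "0 < 9 - 9*p + 2*(p*p)" by (simp add: algebra_simps)
  have q2: "p*p \<le> 2*p" using assms by (simp add: mult_right_mono)
  have B: "4*b = 2*p-1" "4*e = 3-2*p" using assms by simp_all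
  have pb: "4*(p*b) = 2*(p*p) - p" unfolding assms(1) by (simp add: field_simps)
  have pe: "4*(p*e) = 3*p - 2*(p*p)" unfolding assms(2) by (simp add: field_simps)
  note F = q1 q2 B pb pe assms(3,4)
  show "p/2 + p*e/4 < 1/2 + e/4 + b/2"
  proof -
    obtain q r where "p*p = q" "p*e = r" by blast
    with F show ?thesis by (simp only: add_divide_distrib diff_divide_distrib distrib_left; linarith)
  qed
  show "p*b/2 < 1/2 + e/4 + b/2"
  proof -
    obtain q r where "p*p = q" "p*b = r" by blast
    with F show ?thesis by (simp only: add_divide_distrib diff_divide_distrib distrib_left; linarith)
  qed
  show "p*b/2 < (b + 1 + e)/2"
  proof -
    obtain q r where "p*p = q" "p*b = r" by blast
    with F show ?thesis by (simp only: add_divide_distrib diff_divide_distrib distrib_left; linarith)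
  qed
  show "(p + e)/2 < (b + 1 + e)/2" using F by (simp only: add_divide_distrib diff_divide_distrib distrib_left; linarith)
  show "(1 + b)/2 < (b + 1 + e)/2" using F by (simp only: add_divide_distrib diff_divide_distrib distrib_left; linarith)
  show "1 + b + e < 3/4 * (1 + 1 + e)" using F by (simp only: add_divide_distrib diff_divide_distrib distrib_left; linarith)
  show "0 \<le> b" using F by (simp only: add_divide_distrib diff_divide_distrib distrib_left; linarith)
  show "0 \<le> e" using F by (simp only: add_divide_distrib diff_divide_distrib distrib_left; linarith)
qed
lemma ar2: fixes p c :: real assumes "c = (2*p-1)/4" "3/2 < p" "p \<le> 2"
  shows "p*c/4 < p/4" "1/4 + c/4 < p/4" "1 + c < 3/4 * (c + 1 + c)" "0 \<le> c"
proof -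
  have q2: "p*p \<le> 2*p" using assms by (simp add: mult_right_mono)
  have B: "4*c = 2*p-1" using assms by simp_all
  have pc: "4*(p*c) = 2*(p*p) - p" unfolding assms(1) by (simp add: field_simps)
  note F = q2 B pc assms(2,3)
  show "p*c/4 < p/4"
  proof -
    obtain q r where "p*p = q" "p*c = r" by blast
    with F show ?thesis by (simp only: add_divide_distrib diff_divide_distrib distrib_left; linarith)
  qed
  show "1/4 + c/4 < p/4" using B assms(2,3) by (simp only: add_divide_distrib diff_divide_distrib distrib_left; linarith)
  show "1 + c < 3/4 * (c + 1 + c)" using B assms(2) by (simp only: add_divide_distrib diff_divide_distrib distrib_left; linarith)
  show "0 \<le> c" using B assms(2) by (simp only: add_divide_distrib diff_divide_distrib distrib_left; linarith)
qed
theorem lemma3: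
  fixes p :: real
  assumes "1 \<le> p" and "p \<le> 2" and "p \<noteq> 3/2"
  shows "\<forall>sel. valid_selector p sel \<longrightarrow>
           (\<exists>n cls a. wf_instance n cls \<and> w2j_value sel n cls < 3/4 * clause_value cls a)"
proof (intro allI impI)
  fix sel assume "valid_selector p sel"
  hence V: "\<And>n cls k A1 A2 D. f_val p cls k A1 A2 D \<le> f_val p cls k A1 A2 (sel n cls k A1 A2)"
    unfolding valid_selector_def by blast
  define Z where "Z = (\<lambda>_::nat. False)"
  have R: "\<And>cls. w2j_run sel 2 cls 2 =
     ((Z(0:=fst (sel 2 cls 0 Z Z)))(Suc 0 := fst (sel 2 cls (Suc 0) (Z(0:=fst (sel 2 cls 0 Z Z))) (Z(0:=snd (sel 2 cls 0 Z Z))))),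
      (Z(0:=snd (sel 2 cls 0 Z Z)))(Suc 0 := snd (sel 2 cls (Suc 0) (Z(0:=fst (sel 2 cls 0 Z Z))) (Z(0:=snd (sel 2 cls 0 Z Z))))))"
    by (simp only: numeral_2_eq_2 run_Suc Let_def) (simp add: Z_def)
  show "\<exists>n cls a. wf_instance n cls \<and> w2j_value sel n cls < 3/4 * clause_value cls a"
  proof (cases "p < 3/2")
    case True
    define b where "b = (2*p-1)/4"
    define e where "e = (3-2*p)/4"
    note AR = ar1[OF b_def e_def assms(1) True]
    define cls where "cls = cls1 b e"
    define D0 where "D0 = sel 2 cls 0 Z Z"
    define A1 where "A1 = Z(0:=fst D0)"
    define A2 where "A2 = Z(0:=snd D0)"
    define D1 where "D1 = sel 2 cls (Suc 0) A1 A2"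
    have run: "w2j_run sel 2 cls 2 = (A1(Suc 0 := fst D1), A2(Suc 0 := snd D1))"
      using R[of cls] by (simp add: A1_def A2_def D1_def D0_def)
    have ne: "fst D0 \<noteq> snd D0"
    proof
      assume eq: "fst D0 = snd D0"
      have g: "f_val p cls 0 Z Z (True,False) \<le> f_val p cls 0 Z Z D0"
        using V[of cls 0 Z Z "(True,False)" 2] by (simp add: D0_def)
      have h1: "f_val p cls 0 Z Z (True,True) < f_val p cls 0 Z Z (True,False)"
        unfolding cls_def c1_f0 by (rule AR(1))
      have h2: "f_val p cls 0 Z Z (False,False) < f_val p cls 0 Z Z (True,False)"
        unfolding cls_def c1_f0 by (rule AR(2))
      have "D0 = (True,True) \<or> D0 = (False,False)" using eq by (metis prod.collapse)
      thus False using g h1 h2 by auto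
    qed
    have vals: "clause_value cls (A1(Suc 0 := fst D1)) = 1 + b + e \<and> clause_value cls (A2(Suc 0 := snd D1)) = 1 + b + e"
    proof (cases "fst D0")
      case True
      hence a: "A1 0" "\<not> A2 0" using ne unfolding A1_def A2_def by auto
      have "D1 = (True,False)"
      proof -
        have g: "f_val p cls (Suc 0) A1 A2 (True,False) \<le> f_val p cls (Suc 0) A1 A2 D1"
          using V[of cls "Suc 0" A1 A2 "(True,False)" 2] by (simp add: D1_def)
        have h: "f_val p cls (Suc 0) A1 A2 (True,True) < f_val p cls (Suc 0) A1 A2 (True,False)"
           "f_val p cls (Suc 0) A1 A2 (False,False) < f_val p cls (Suc 0) A1 A2 (True,False)"
           "f_val p cls (Suc 0) A1 A2 (False,True) < f_val p cls (Suc 0) A1 A2 (True,False)"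
          unfolding cls_def c1_f1a[of A1 A2, OF a] by (rule AR(3), rule AR(4), rule AR(5))
        obtain x y where xy: "D1 = (x,y)" by force
        show ?thesis using g h unfolding xy by (cases x; cases y) auto
      qed
      thus ?thesis using a by (simp add: cls_def c1_val A1_def A2_def Z_def)
    next
      case False
      hence a: "\<not> A1 0" "A2 0" using ne unfolding A1_def A2_def by auto
      have "D1 = (False,True)"
      proof -
        have g: "f_val p cls (Suc 0) A1 A2 (False,True) \<le> f_val p cls (Suc 0) A1 A2 D1"
          using V[of cls "Suc 0" A1 A2 "(False,True)" 2] by (simp add: D1_def)
        have h: "f_val p cls (Suc 0) A1 A2 (True,True) < f_val p cls (Suc 0) A1 A2 (False,True)"
           "f_val p cls (Suc 0) A1 A2 (False,False) < f_val p cls (Suc 0) A1 A2 (False,True)"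
           "f_val p cls (Suc 0) A1 A2 (True,False) < f_val p cls (Suc 0) A1 A2 (False,True)"
          unfolding cls_def c1_f1b[of A1 A2, OF a] by (rule AR(3), rule AR(4), rule AR(5))
        obtain x y where xy: "D1 = (x,y)" by force
        show ?thesis using g h unfolding xy by (cases x; cases y) auto
      qed
      thus ?thesis using a by (simp add: cls_def c1_val A1_def A2_def Z_def)
    qed
    have "wf_instance 2 cls" using AR(7,8) by (simp add: wf_instance_def cls_def cls1_def)
    moreover have "clause_value cls (\<lambda>v. v = 0) = 1 + 1 + e" by (simp add: cls_def c1_val)
    ultimately have "wf_instance 2 cls \<and> w2j_value sel 2 cls < 3/4 * clause_value cls (\<lambda>v. v = 0)"
      using vals AR(6) unfolding w2j_value_def run by simp
    thus ?thesis by blast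
  next
    case False
    hence p: "3/2 < p" using assms by auto
    define c where "c = (2*p-1)/4"
    note AR = ar2[OF c_def p assms(2)]
    define cls where "cls = cls2 c"
    define D0 where "D0 = sel 2 cls 0 Z Z"
    define A1 where "A1 = Z(0:=fst D0)"
    define A2 where "A2 = Z(0:=snd D0)"
    define D1 where "D1 = sel 2 cls (Suc 0) A1 A2"
    have run: "w2j_run sel 2 cls 2 = (A1(Suc 0 := fst D1), A2(Suc 0 := snd D1))"
      using R[of cls] by (simp add: A1_def A2_def D1_def D0_def)
    have "D0 = (False,False)"
    proof -
      have g: "f_val p cls 0 Z Z (False,False) \<le> f_val p cls 0 Z Z D0"
        using V[of cls 0 Z Z "(False,False)" 2] by (simp add: D0_def)
      have h: "f_val p cls 0 Z Z (True,True) < f_val p cls 0 Z Z (False,False)"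
         "f_val p cls 0 Z Z (True,False) < f_val p cls 0 Z Z (False,False)"
         "f_val p cls 0 Z Z (False,True) < f_val p cls 0 Z Z (False,False)"
        unfolding cls_def c2_f0 by (rule AR(1), rule AR(2), rule AR(2))
      obtain x y where xy: "D0 = (x,y)" by force
      show ?thesis using g h unfolding xy by (cases x; cases y) auto
    qed
    hence "\<not> A1 0" "\<not> A2 0" by (auto simp: A1_def A2_def Z_def)
    hence "clause_value cls (A1(Suc 0 := fst D1)) = 1 + c \<and> clause_value cls (A2(Suc 0 := snd D1)) = 1 + c"
      by (simp add: cls_def c2_val)
    moreover have "wf_instance 2 cls" using AR(4) by (simp add: wf_instance_def cls_def cls2_def)
    moreover have "clause_value cls (\<lambda>v. True) = c + 1 + c" by (simp add: cls_def c2_val)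
    ultimately have "wf_instance 2 cls \<and> w2j_value sel 2 cls < 3/4 * clause_value cls (\<lambda>v. True)"
      using AR(3) unfolding w2j_value_def run by simp
    thus ?thesis by blast
  qed
qed

end
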